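(* For every $x\in\mathbb{R}$ there exists $k\in\{0,1,2,3\}$ such that $|\mathrm{Re}(H^{(k)}(x))|\ge 1/4$, where $H^{(k)}$ denotes the $k$-th derivative of $H$.
   Context: Rudin–Shapiro polynomials: $P_0(z)=Q_0(z)=1$ and for $s\ge0$, $P_{s+1}(z)=P_s(z)+z^{2^s}Q_s(z)$, $Q_{s+1}(z)=P_s(z)-z^{2^s}Q_s(z)$. Let $t$ be an odd positive integer and $T:=2^{t+10}$. For $x\in\mathbb{R}$ define $\alpha(x):=2^{-(t+1)/2}P_t(e^{ix/T})$, $\beta(x):=2^{-(t+1)/2}Q_t(e^{ix/T})$, and $H(x):=e^{ix}\alpha(x)+e^{2ix}\beta(x)$. *)

theory Defs
  imports "HOL-Analysis.Analysis"
begin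

fun RS_P :: "nat \<Rightarrow> complex \<Rightarrow> complex"
and RS_Q :: "nat \<Rightarrow> complex \<Rightarrow> complex" where
  "RS_P 0 z = 1"
| "RS_Q 0 z = 1"
| "RS_P (Suc s) z = RS_P s z + z ^ (2 ^ s) * RS_Q s z"
| "RS_Q (Suc s) z = RS_P s z - z ^ (2 ^ s) * RS_Q s z"

definition RS_T :: "nat \<Rightarrow> real" where
  "RS_T t = 2 ^ (t + 10)"

definition RS_alpha :: "nat \<Rightarrow> real \<Rightarrow> complex" where
  "RS_alpha t x = complex_of_real (2 powr (- (real t + 1) / 2))
                   * RS_P t (exp (\<i> * complex_of_real (x / RS_T t)))"

definition RS_beta :: "nat \<Rightarrow> real \<Rightarrow> complex" where
  "RS_beta t x = complex_of_real (2 powr (- (real t + 1) / 2))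
                   * RS_Q t (exp (\<i> * complex_of_real (x / RS_T t)))"

definition RS_H :: "nat \<Rightarrow> real \<Rightarrow> complex" where
  "RS_H t x = exp (\<i> * complex_of_real x) * RS_alpha t x
              + exp (2 * \<i> * complex_of_real x) * RS_beta t x"

definition higher_vderiv :: "nat \<Rightarrow> (real \<Rightarrow> 'a::real_normed_vector) \<Rightarrow> real \<Rightarrow> 'a" where
  "higher_vderiv k f = ((\<lambda>g x. vector_derivative g (at x)) ^^ k) f"

end

theory Submission imports Defs begin

definition ES2 :: "(nat \<Rightarrow> complex) \<Rightarrow> (nat \<Rightarrow> real) \<Rightarrow> (nat \<Rightarrow> complex) \<Rightarrow> (nat \<Rightarrow> real) \<Rightarrow> nat \<Rightarrow> real \<Rightarrow> complex" where
  "ES2 a la b lb n x = (\<Sum>j<n. a j * exp (\<i> * complex_of_real (la j * x)))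
                      + (\<Sum>j<n. b j * exp (\<i> * complex_of_real (lb j * x)))"

lemma exp_vd: "((\<lambda>x. exp (\<i> * complex_of_real (l * x))) has_vector_derivative
    (\<i> * complex_of_real l) * exp (\<i> * complex_of_real (l * x))) (at x)"
proof -
  have "((\<lambda>w. exp (\<i> * complex_of_real l * w)) has_field_derivative
     exp (\<i> * complex_of_real l * of_real x) * (\<i> * complex_of_real l)) (at (of_real x))"
    by (auto intro!: derivative_eq_intros)
  from has_vector_derivative_real_field[OF this, where s=UNIV]
  show ?thesis by (simp add: ac_simps)
qed

lemma ES2_vd: "vector_derivative (ES2 a la b lb n) (at x) =
   ES2 (\<lambda>j. a j * (\<i> * complex_of_real (la j))) la (\<lambda>j. b j * (\<i> * complex_of_real (lb j))) lb n x"
proof -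
  have "(ES2 a la b lb n has_vector_derivative
     (\<Sum>j<n. a j * ((\<i> * complex_of_real (la j)) * exp (\<i> * complex_of_real (la j * x))))
   + (\<Sum>j<n. b j * ((\<i> * complex_of_real (lb j)) * exp (\<i> * complex_of_real (lb j * x))))) (at x)"
    unfolding ES2_def
    by (intro has_vector_derivative_add has_vector_derivative_sum has_vector_derivative_mult_right exp_vd)
  then have "(ES2 a la b lb n has_vector_derivative
     ES2 (\<lambda>j. a j * (\<i> * complex_of_real (la j))) la (\<lambda>j. b j * (\<i> * complex_of_real (lb j))) lb n x) (at x)"
    by (simp add: ES2_def mult.assoc)
  then show ?thesis by (rule vector_derivative_at)
qed

lemma ES2_hd: "higher_vderiv k (ES2 a la b lb n) =
   ES2 (\<lambda>j. a j * (\<i> * complex_of_real (la j))^k) la (\<lambda>j. b j * (\<i> * complex_of_real (lb j))^k) lb n"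
proof (induction k)
  case 0
  then show ?case by (simp add: higher_vderiv_def)
next
  case (Suc k)
  have "higher_vderiv (Suc k) (ES2 a la b lb n) = (\<lambda>x. vector_derivative (higher_vderiv k (ES2 a la b lb n)) (at x))"
    by (simp add: higher_vderiv_def)
  also have "\<dots> = ES2 (\<lambda>j. a j * (\<i> * complex_of_real (la j))^Suc k) la (\<lambda>j. b j * (\<i> * complex_of_real (lb j))^Suc k) lb n"
    unfolding Suc ES2_vd by (rule ext) (simp add: mult.assoc mult.commute mult.left_commute)
  finally show ?case .
qed

fun pc :: "nat \<Rightarrow> nat \<Rightarrow> complex" and qc :: "nat \<Rightarrow> nat \<Rightarrow> complex" where
  "pc 0 j = (if j = 0 then 1 else 0)"
| "qc 0 j = (if j = 0 then 1 else 0)"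
| "pc (Suc s) j = (if j < 2^s then pc s j else qc s (j - 2^s))"
| "qc (Suc s) j = (if j < 2^s then pc s j else - qc s (j - 2^s))"

definition S :: "(nat \<Rightarrow> complex) \<Rightarrow> nat \<Rightarrow> nat \<Rightarrow> complex \<Rightarrow> complex" where
  "S c n m z = (\<Sum>j<n. c j * of_nat j ^ m * z ^ j)"

lemma sum_split2: "(\<Sum>j<N+N. f j) = (\<Sum>j<N. f j) + (\<Sum>j<N. f (j+N))" for f :: "nat \<Rightarrow> 'a::comm_monoid_add"
proof -
  have "(\<Sum>j<N+N. f j) = (\<Sum>j\<in>{0..<N}. f j) + (\<Sum>j\<in>{N..<N+N}. f j)"
    using sum.atLeastLessThan_concat[of 0 N "N+N" f] by (simp add: atLeast0LessThan)
  also have "(\<Sum>j\<in>{N..<N+N}. f j) = (\<Sum>j\<in>{0..<N}. f (j+N))"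
    using sum.shift_bounds_nat_ivl[of f 0 N N] by simp
  finally show ?thesis by (simp add: atLeast0LessThan)
qed

lemma S_Suc:
  "S (pc (Suc s)) (2^Suc s) m z = S (pc s) (2^s) m z + z^(2^s) * (\<Sum>j<2^s. qc s j * (of_nat (2^s) + of_nat j)^m * z^j)"
  "S (qc (Suc s)) (2^Suc s) m z = S (pc s) (2^s) m z - z^(2^s) * (\<Sum>j<2^s. qc s j * (of_nat (2^s) + of_nat j)^m * z^j)"
proof -
  have e: "(2::nat)^Suc s = 2^s + 2^s" by simp
  show "S (pc (Suc s)) (2^Suc s) m z = S (pc s) (2^s) m z + z^(2^s) * (\<Sum>j<2^s. qc s j * (of_nat (2^s) + of_nat j)^m * z^j)"
    unfolding S_def e sum_split2
    by (simp add: sum_distrib_left power_add ac_simps)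
  show "S (qc (Suc s)) (2^Suc s) m z = S (pc s) (2^s) m z - z^(2^s) * (\<Sum>j<2^s. qc s j * (of_nat (2^s) + of_nat j)^m * z^j)"
    unfolding S_def e sum_split2
    by (simp add: sum_distrib_left power_add ac_simps sum_negf[symmetric])
qed

lemma RS_eq: "RS_P s z = S (pc s) (2^s) 0 z \<and> RS_Q s z = S (qc s) (2^s) 0 z"
proof (induction s)
  case 0
  then show ?case by (simp add: S_def)
next
  case (Suc s)
  then show ?case by (simp only: S_Suc RS_P.simps RS_Q.simps) (simp add: S_def)
qed

lemma binom_sum:
  fixes a b z :: complex
  shows "(\<Sum>j\<in>A. c j * (a + b * of_nat j)^k * z^j) =
     (\<Sum>l\<le>k. of_nat (k choose l) * b^l * a^(k-l) * (\<Sum>j\<in>A. c j * of_nat j ^ l * z^j))"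
proof -
  have "(\<Sum>j\<in>A. c j * (a + b * of_nat j)^k * z^j) =
        (\<Sum>j\<in>A. \<Sum>l\<le>k. c j * (of_nat (k choose l) * (b * of_nat j)^l * a^(k-l)) * z^j)"
    by (subst add.commute, subst binomial_ring) (simp add: sum_distrib_left sum_distrib_right)
  also have "\<dots> = (\<Sum>l\<le>k. \<Sum>j\<in>A. c j * (of_nat (k choose l) * (b * of_nat j)^l * a^(k-l)) * z^j)"
    by (rule sum.swap)
  also have "\<dots> = (\<Sum>l\<le>k. of_nat (k choose l) * b^l * a^(k-l) * (\<Sum>j\<in>A. c j * of_nat j ^ l * z^j))"
    by (simp add: sum_distrib_left power_mult_distrib ac_simps)
  finally show ?thesis .
qed

lemma paral: "(cmod (a + b))^2 + (cmod (a - b))^2 = 2 * ((cmod a)^2 + (cmod b)^2)"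
  by (simp only: cmod_power2) (simp add: power2_eq_square algebra_simps)

lemma choose_less_sum: "(\<Sum>l<m. real (m choose l)) = 2^m - 1"
proof -
  have "(\<Sum>l<Suc m. real (m choose l)) = 2^m"
    using choose_row_sum[of m] lessThan_Suc_atMost[of m] by (metis of_nat_numeral of_nat_power of_nat_sum)
  then show ?thesis by simp
qed

lemma S_bound:
  assumes z: "cmod z = 1"
  shows "norm (S (pc s) (2^s) m z, S (qc s) (2^s) m z) \<le> sqrt 2 ^ (s+1) * 2^(s*m)"
proof (induction s arbitrary: m)
  case 0
  have h1: "cmod ((0::complex)^m) \<le> 1" by (cases m) auto
  then have "(cmod ((0::complex)^m))^2 \<le> 1" by (simp add: power_le_one)
  with h1 show ?case by (simp add: S_def norm_Pair real_sqrt_mult)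
next
  case (Suc s)
  define N where "N = (2::nat)^s"
  define R where "R = sqrt 2 ^ (s+1)"
  define A where "A = S (pc s) N m z"
  define B where "B = S (qc s) N m z"
  define E where "E = (\<Sum>l<m. of_nat (m choose l) * of_nat N^(m-l) * S (qc s) N l z)"
  define W where "W = z^N"
  have W1: "cmod W = 1" using z by (simp add: W_def norm_power)
  have IH: "cmod (S (qc s) N l z) \<le> R * real N ^ l" for l
  proof -
    have "cmod (S (qc s) N l z) \<le> norm (S (pc s) N l z, S (qc s) N l z)"
      by (simp add: norm_Pair real_le_rsqrt)
    also have "\<dots> \<le> R * real N ^ l" using Suc.IH[of l] by (simp add: N_def R_def power_mult)
    finally show ?thesis .
  qed
  have expand: "(\<Sum>j<N. qc s j * (of_nat N + of_nat j)^m * z^j) = B + E"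
  proof -
    have "(\<Sum>j<N. qc s j * (of_nat N + of_nat j)^m * z^j) = (\<Sum>j<N. qc s j * (of_nat N + 1 * of_nat j)^m * z^j)"
      by simp
    also have "\<dots> = (\<Sum>l<Suc m. of_nat (m choose l) * 1^l * of_nat N^(m-l) * S (qc s) N l z)"
      unfolding binom_sum lessThan_Suc_atMost S_def ..
    also have "\<dots> = B + E" by (simp add: B_def E_def)
    finally show ?thesis .
  qed
  have hP: "S (pc (Suc s)) (2^Suc s) m z = A + W * (B + E)"
    using S_Suc(1)[of s m z] expand by (simp add: A_def W_def N_def)
  have hQ: "S (qc (Suc s)) (2^Suc s) m z = A - W * (B + E)"
    using S_Suc(2)[of s m z] expand by (simp add: A_def W_def N_def)
  have n1: "norm (A + W * (B + E), A - W * (B + E)) = sqrt 2 * norm (A, B + E)"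
  proof -
    have "cmod (W * (B + E)) = cmod (B + E)" by (simp add: norm_mult W1)
    then show ?thesis by (simp add: norm_Pair paral real_sqrt_mult[symmetric] distrib_left)
  qed
  have n2: "norm (A, B + E) \<le> norm (A, B) + cmod E"
  proof -
    have "norm (A, B + E) = norm ((A, B) + (0, E))" by simp
    also have "\<dots> \<le> norm (A, B) + norm ((0::complex), E)" by (rule norm_triangle_ineq)
    finally show ?thesis by (simp add: norm_Pair)
  qed
  have nAB: "norm (A, B) \<le> R * real N ^ m"
    using Suc.IH[of m] by (simp add: A_def B_def N_def R_def power_mult)
  have nE: "cmod E \<le> R * real N ^ m * (2^m - 1)"
  proof -
    have "cmod E \<le> (\<Sum>l<m. cmod (of_nat (m choose l) * of_nat N^(m-l) * S (qc s) N l z))"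
      unfolding E_def by (rule norm_sum)
    also have "\<dots> \<le> (\<Sum>l<m. real (m choose l) * real N^(m-l) * (R * real N ^ l))"
    proof (rule sum_mono)
      fix l assume "l \<in> {..<m}"
      have "cmod (of_nat (m choose l) * of_nat N^(m-l) * S (qc s) N l z) =
            real (m choose l) * real N^(m-l) * cmod (S (qc s) N l z)"
        by (simp add: norm_mult norm_power)
      also have "\<dots> \<le> real (m choose l) * real N^(m-l) * (R * real N ^ l)"
        by (rule mult_left_mono[OF IH]) simp
      finally show "cmod (of_nat (m choose l) * of_nat N^(m-l) * S (qc s) N l z)
          \<le> real (m choose l) * real N^(m-l) * (R * real N ^ l)" .
    qed
    also have "\<dots> = (\<Sum>l<m. R * real N ^ m * real (m choose l))"
    proof (rule sum.cong[OF refl])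
      fix l assume "l \<in> {..<m}"
      then have "real N^(m-l) * real N ^ l = real N ^ m"
        by (simp add: power_add[symmetric])
      then show "real (m choose l) * real N^(m-l) * (R * real N ^ l) = R * real N ^ m * real (m choose l)"
        by (metis mult.commute mult.left_commute)
    qed
    also have "\<dots> = R * real N ^ m * (2^m - 1)"
      by (simp add: sum_distrib_left[symmetric] choose_less_sum)
    finally show ?thesis .
  qed
  have "norm (S (pc (Suc s)) (2^Suc s) m z, S (qc (Suc s)) (2^Suc s) m z) = sqrt 2 * norm (A, B + E)"
    using hP hQ n1 by simp
  also have "\<dots> \<le> sqrt 2 * (R * real N ^ m + R * real N ^ m * (2^m - 1))"
    using n2 nAB nE by (simp add: mult_left_mono)
  also have "\<dots> = sqrt 2 ^ (Suc s + 1) * 2 ^ (Suc s * m)"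
    by (simp add: R_def N_def power_mult[symmetric] power_add algebra_simps)
  finally show ?case .
qed


lemma c_prop: "2 powr (- (real t + 1) / 2) * sqrt 2 ^ (t+1) = 1"
proof -
  have "sqrt 2 ^ (t+1) = 2 powr ((real t + 1) / 2)"
    by (simp add: powr_half_sqrt[symmetric] powr_realpow[symmetric] powr_powr powr_add[symmetric] add_divide_distrib add.commute)
  then show ?thesis by (simp add: powr_add[symmetric] field_simps)
qed

lemma final_real:
  fixes a1 a2 b1 b2 :: real
  assumes "a1^2 + a2^2 + b1^2 + b2^2 = 1"
    and "\<bar>a1 + b1\<bar> < 3/8" "\<bar>a2 + 2*b2\<bar> < 3/8" "\<bar>a1 + 4*b1\<bar> < 3/8" "\<bar>a2 + 8*b2\<bar> < 3/8"
  shows False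
proof -
  have "\<bar>b1\<bar> \<le> 1/4" "\<bar>a1\<bar> \<le> 5/8" "\<bar>b2\<bar> \<le> 1/8" "\<bar>a2\<bar> \<le> 5/8"
    using assms(2-5) by (auto simp: abs_if split: if_splits)
  then have "b1^2 \<le> (1/4)^2" "a1^2 \<le> (5/8)^2" "b2^2 \<le> (1/8)^2" "a2^2 \<le> (5/8)^2"
    by (simp_all only: abs_le_square_iff[symmetric])
  with assms(1) show False by (simp add: power2_eq_square)
qed

lemma RS_norm: assumes "cmod z = 1"
  shows "(cmod (RS_P s z))^2 + (cmod (RS_Q s z))^2 = 2^(s+1)"
proof (induction s)
  case 0
  then show ?case by simp
next
  case (Suc s)
  have "cmod (z ^ 2 ^ s * RS_Q s z) = cmod (RS_Q s z)" using assms by (simp add: norm_mult norm_power)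
  then show ?case using Suc paral[of "RS_P s z" "z ^ 2 ^ s * RS_Q s z"] by simp
qed

lemma exp_shift: "exp (\<i> * complex_of_real ((a + real j / T) * y)) =
   exp (\<i> * complex_of_real (a * y)) * exp (\<i> * complex_of_real (y / T)) ^ j"
proof -
  have "\<i> * complex_of_real ((a + real j / T) * y) = \<i> * complex_of_real (a * y) + of_nat j * (\<i> * complex_of_real (y / T))"
    by (simp add: algebra_simps)
  then show ?thesis by (simp only: exp_add exp_of_nat_mult)
qed

lemma H_form: "RS_H t = ES2 (\<lambda>j. complex_of_real (2 powr (- (real t + 1) / 2)) * pc t j) (\<lambda>j. 1 + real j / RS_T t)
      (\<lambda>j. complex_of_real (2 powr (- (real t + 1) / 2)) * qc t j) (\<lambda>j. 2 + real j / RS_T t) (2^t)"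
proof
  fix y
  define c where "c = complex_of_real (2 powr (- (real t + 1) / 2))"
  define z where "z = exp (\<i> * complex_of_real (y / RS_T t))"
  have e2: "exp (2 * \<i> * complex_of_real y) = exp (\<i> * complex_of_real (2 * y))" by (simp add: ac_simps)
  have "RS_H t y = exp (\<i> * complex_of_real y) * (c * RS_P t z) + exp (\<i> * complex_of_real (2 * y)) * (c * RS_Q t z)"
    unfolding RS_H_def RS_alpha_def RS_beta_def c_def z_def e2 ..
  also have "\<dots> = (\<Sum>j<2^t. c * pc t j * (exp (\<i> * complex_of_real y) * z ^ j))
     + (\<Sum>j<2^t. c * qc t j * (exp (\<i> * complex_of_real (2 * y)) * z ^ j))"
    using RS_eq[of t z] by (simp add: S_def sum_distrib_left ac_simps)
  also have "\<dots> = ES2 (\<lambda>j. c * pc t j) (\<lambda>j. 1 + real j / RS_T t) (\<lambda>j. c * qc t j) (\<lambda>j. 2 + real j / RS_T t) (2^t) y"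
    unfolding ES2_def z_def using exp_shift[of 1 _ "RS_T t" y] exp_shift[of 2 _ "RS_T t" y] by simp
  finally show "RS_H t y = ES2 (\<lambda>j. complex_of_real (2 powr (- (real t + 1) / 2)) * pc t j) (\<lambda>j. 1 + real j / RS_T t)
      (\<lambda>j. complex_of_real (2 powr (- (real t + 1) / 2)) * qc t j) (\<lambda>j. 2 + real j / RS_T t) (2^t) y"
    by (simp add: c_def)
qed

lemma term_bound:
  assumes z: "cmod z = 1" and m: "1 \<le> m"
  shows "2 powr (-(real t+1)/2) * (1/RS_T t)^m * cmod (S (pc t) (2^t) m z) \<le> 1/1024"
    "2 powr (-(real t+1)/2) * (1/RS_T t)^m * cmod (S (qc t) (2^t) m z) \<le> 1/1024"
proof -
  define cr where "cr = 2 powr (-(real t+1)/2)"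
  have cr0: "cr \<ge> 0" by (simp add: cr_def)
  have B: "norm (S (pc t) (2^t) m z, S (qc t) (2^t) m z) \<le> sqrt 2 ^ (t+1) * 2^(t*m)"
    by (rule S_bound[OF z])
  have Bp: "cmod (S (pc t) (2^t) m z) \<le> sqrt 2 ^ (t+1) * 2^(t*m)"
    using B by (rule order_trans[rotated]) (simp add: norm_Pair real_sqrt_sum_squares_ge1)
  have Bq: "cmod (S (qc t) (2^t) m z) \<le> sqrt 2 ^ (t+1) * 2^(t*m)"
    using B by (rule order_trans[rotated]) (simp add: norm_Pair real_sqrt_sum_squares_ge2)
  have key: "cr * (1/RS_T t)^m * (sqrt 2 ^ (t+1) * 2^(t*m)) \<le> 1/1024"
  proof -
    have "cr * (1/RS_T t)^m * (sqrt 2 ^ (t+1) * 2^(t*m)) = (cr * sqrt 2 ^ (t+1)) * ((2^t / RS_T t)^m)"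
      by (simp add: power_mult power_divide)
    also have "\<dots> = (1/1024)^m" using c_prop[of t]
      by (simp add: cr_def RS_T_def power_add)
    also have "\<dots> \<le> (1/1024)^1" by (rule power_decreasing[OF m]) simp_all
    finally show ?thesis by simp
  qed
  have Tp: "(1/RS_T t)^m \<ge> 0" by (simp add: RS_T_def)
  show "2 powr (-(real t+1)/2) * (1/RS_T t)^m * cmod (S (pc t) (2^t) m z) \<le> 1/1024"
    using key mult_left_mono[OF Bp mult_nonneg_nonneg[OF cr0 Tp]] unfolding cr_def by linarith
  show "2 powr (-(real t+1)/2) * (1/RS_T t)^m * cmod (S (qc t) (2^t) m z) \<le> 1/1024"
    using key mult_left_mono[OF Bq mult_nonneg_nonneg[OF cr0 Tp]] unfolding cr_def by linarith
qed

lemma choose_shift_sum: "(\<Sum>l<k. real (k choose Suc l)) \<le> 2^k"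
proof -
  have "(\<Sum>l\<le>k. real (k choose l)) = 2^k"
    using choose_row_sum[of k] by (metis of_nat_numeral of_nat_power of_nat_sum)
  then have "1 + (\<Sum>l<k. real (k choose Suc l)) = 2^k"
    by (simp add: sum.atMost_shift)
  then show ?thesis by linarith
qed

lemma decomp:
  assumes k: "k \<le> 3"
  shows "\<exists>Err. higher_vderiv k (RS_H t) x =
     \<i>^k * (complex_of_real (2 powr (-(real t+1)/2)) * exp (\<i> * complex_of_real x) * RS_P t (exp (\<i> * complex_of_real (x / RS_T t)))
       + 2^k * (complex_of_real (2 powr (-(real t+1)/2)) * exp (\<i> * complex_of_real (2 * x)) * RS_Q t (exp (\<i> * complex_of_real (x / RS_T t)))))
     + Err \<and> cmod Err < 1/8"
proof -
  define cr where "cr = 2 powr (-(real t+1)/2)"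
  define c where "c = complex_of_real cr"
  define z where "z = exp (\<i> * complex_of_real (x / RS_T t))"
  define e1 where "e1 = exp (\<i> * complex_of_real x)"
  define e2 where "e2 = exp (\<i> * complex_of_real (2 * x))"
  define \<tau> where "\<tau> = complex_of_real (1 / RS_T t)"
  define N where "N = (2::nat)^t"
  have cr0: "cr \<ge> 0" by (simp add: cr_def)
  have Tpos: "RS_T t > 0" by (simp add: RS_T_def)
  have z1: "cmod z = 1" by (simp add: z_def)
  have e11: "cmod e1 = 1" by (simp add: e1_def)
  have e21: "cmod e2 = 1" by (simp add: e2_def)
  have cc: "cmod c = cr" using cr0 by (simp add: c_def)
  have ct: "cmod \<tau> = 1 / RS_T t" unfolding \<tau>_def norm_of_real using Tpos by simp
  have la: "complex_of_real (a + real j / RS_T t) = a + \<tau> * of_nat j" for a j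
    by (simp add: \<tau>_def divide_inverse mult.commute)
  have hk: "higher_vderiv k (RS_H t) x =
     (\<Sum>j<N. c * pc t j * (\<i> * complex_of_real (1 + real j / RS_T t))^k * exp (\<i> * complex_of_real ((1 + real j / RS_T t) * x)))
   + (\<Sum>j<N. c * qc t j * (\<i> * complex_of_real (2 + real j / RS_T t))^k * exp (\<i> * complex_of_real ((2 + real j / RS_T t) * x)))"
    unfolding H_form ES2_hd ES2_def N_def c_def cr_def ..
  have s1: "(\<Sum>j<N. c * pc t j * (\<i> * complex_of_real (1 + real j / RS_T t))^k * exp (\<i> * complex_of_real ((1 + real j / RS_T t) * x)))
      = \<i>^k * c * e1 * (\<Sum>j<N. pc t j * (1 + \<tau> * of_nat j)^k * z^j)"
    unfolding sum_distrib_left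
  proof (rule sum.cong[OF refl])
    fix j
    have ex: "exp (\<i> * complex_of_real ((1 + real j / RS_T t) * x)) = e1 * z^j"
      using exp_shift[of 1 j "RS_T t" x] by (simp add: e1_def z_def)
    show "c * pc t j * (\<i> * complex_of_real (1 + real j / RS_T t))^k * exp (\<i> * complex_of_real ((1 + real j / RS_T t) * x))
      = \<i>^k * c * e1 * (pc t j * (1 + \<tau> * of_nat j)^k * z^j)"
      unfolding ex la by (simp add: power_mult_distrib ac_simps)
  qed
  have s2: "(\<Sum>j<N. c * qc t j * (\<i> * complex_of_real (2 + real j / RS_T t))^k * exp (\<i> * complex_of_real ((2 + real j / RS_T t) * x)))
      = \<i>^k * c * e2 * (\<Sum>j<N. qc t j * (2 + \<tau> * of_nat j)^k * z^j)"
    unfolding sum_distrib_left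
  proof (rule sum.cong[OF refl])
    fix j
    have ex: "exp (\<i> * complex_of_real ((2 + real j / RS_T t) * x)) = e2 * z^j"
      using exp_shift[of 2 j "RS_T t" x] by (simp add: e2_def z_def)
    show "c * qc t j * (\<i> * complex_of_real (2 + real j / RS_T t))^k * exp (\<i> * complex_of_real ((2 + real j / RS_T t) * x))
      = \<i>^k * c * e2 * (qc t j * (2 + \<tau> * of_nat j)^k * z^j)"
      unfolding ex la by (simp add: power_mult_distrib ac_simps)
  qed
  define Rp where "Rp = (\<Sum>l<k. of_nat (k choose Suc l) * \<tau>^Suc l * S (pc t) N (Suc l) z)"
  define Rq where "Rq = (\<Sum>l<k. of_nat (k choose Suc l) * \<tau>^Suc l * 2^(k - Suc l) * S (qc t) N (Suc l) z)"
  have b1: "(\<Sum>j<N. pc t j * (1 + \<tau> * of_nat j)^k * z^j) = RS_P t z + Rp"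
  proof -
    have "(\<Sum>j<N. pc t j * (1 + \<tau> * of_nat j)^k * z^j) = (\<Sum>l\<le>k. of_nat (k choose l) * \<tau>^l * 1^(k-l) * S (pc t) N l z)"
      unfolding binom_sum S_def ..
    also have "\<dots> = RS_P t z + Rp"
      by (simp add: sum.atMost_shift Rp_def RS_eq[of t z, THEN conjunct1] N_def)
    finally show ?thesis .
  qed
  have b2: "(\<Sum>j<N. qc t j * (2 + \<tau> * of_nat j)^k * z^j) = 2^k * RS_Q t z + Rq"
  proof -
    have "(\<Sum>j<N. qc t j * (2 + \<tau> * of_nat j)^k * z^j) = (\<Sum>l\<le>k. of_nat (k choose l) * \<tau>^l * 2^(k-l) * S (qc t) N l z)"
      unfolding binom_sum S_def ..
    also have "\<dots> = 2^k * RS_Q t z + Rq"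
      by (simp add: sum.atMost_shift Rq_def RS_eq[of t z, THEN conjunct2] N_def)
    finally show ?thesis .
  qed
  have Hk: "higher_vderiv k (RS_H t) x = \<i>^k * (c * e1 * RS_P t z + 2^k * (c * e2 * RS_Q t z)) + \<i>^k * (c * e1 * Rp + c * e2 * Rq)"
    unfolding hk s1 s2 b1 b2 by (simp add: algebra_simps)
  have TB: "cr * (1/RS_T t)^m * cmod (S (pc t) N m z) \<le> 1/1024"
           "cr * (1/RS_T t)^m * cmod (S (qc t) N m z) \<le> 1/1024" if "1 \<le> m" for m
    using term_bound[OF z1 that, of t] by (simp_all add: cr_def N_def)
  have bp: "cr * cmod Rp \<le> 8/1024"
  proof -
    have "cmod Rp \<le> (\<Sum>l<k. cmod (of_nat (k choose Suc l) * \<tau>^Suc l * S (pc t) N (Suc l) z))"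
      unfolding Rp_def by (rule norm_sum)
    then have "cr * cmod Rp \<le> cr * (\<Sum>l<k. cmod (of_nat (k choose Suc l) * \<tau>^Suc l * S (pc t) N (Suc l) z))"
      using cr0 by (rule mult_left_mono)
    also have "\<dots> = (\<Sum>l<k. real (k choose Suc l) * (cr * (1/RS_T t)^Suc l * cmod (S (pc t) N (Suc l) z)))"
      by (simp add: sum_distrib_left norm_mult norm_power ct ac_simps)
    also have "\<dots> \<le> (\<Sum>l<k. real (k choose Suc l) * (1/1024))"
      by (rule sum_mono, rule mult_left_mono, rule TB) simp_all
    also have "\<dots> = (\<Sum>l<k. real (k choose Suc l)) / 1024"
      by (simp add: sum_divide_distrib)
    also have "\<dots> \<le> 2^k / 1024" using choose_shift_sum[of k] by simp
    also have "\<dots> \<le> 8 / 1024" using power_increasing[OF k, of "2::real"] by simp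
    finally show ?thesis .
  qed
  have bq: "cr * cmod Rq \<le> 64/1024"
  proof -
    have "cmod Rq \<le> (\<Sum>l<k. cmod (of_nat (k choose Suc l) * \<tau>^Suc l * 2^(k - Suc l) * S (qc t) N (Suc l) z))"
      unfolding Rq_def by (rule norm_sum)
    then have "cr * cmod Rq \<le> cr * (\<Sum>l<k. cmod (of_nat (k choose Suc l) * \<tau>^Suc l * 2^(k - Suc l) * S (qc t) N (Suc l) z))"
      using cr0 by (rule mult_left_mono)
    also have "\<dots> = (\<Sum>l<k. real (k choose Suc l) * 2^(k - Suc l) * (cr * (1/RS_T t)^Suc l * cmod (S (qc t) N (Suc l) z)))"
      by (simp add: sum_distrib_left norm_mult norm_power ct ac_simps)
    also have "\<dots> \<le> (\<Sum>l<k. real (k choose Suc l) * 8 * (1/1024))"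
    proof (rule sum_mono)
      fix l assume "l \<in> {..<k}"
      have "(2::real)^(k - Suc l) \<le> 2^3" by (rule power_increasing) (use k in auto)
      then have f1: "real (k choose Suc l) * 2^(k - Suc l) \<le> real (k choose Suc l) * 8"
        by (intro mult_left_mono) simp_all
      have f2: "cr * (1/RS_T t)^Suc l * cmod (S (qc t) N (Suc l) z) \<le> 1/1024" by (rule TB) simp
      have f3: "cr * (1/RS_T t)^Suc l * cmod (S (qc t) N (Suc l) z) \<ge> 0" using cr0 Tpos by simp
      show "real (k choose Suc l) * 2^(k - Suc l) * (cr * (1/RS_T t)^Suc l * cmod (S (qc t) N (Suc l) z))
          \<le> real (k choose Suc l) * 8 * (1/1024)"
        by (rule mult_mono[OF f1 f2 _ f3]) simp
    qed
    also have "\<dots> = (\<Sum>l<k. real (k choose Suc l)) * 8 / 1024"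
      by (simp add: sum_distrib_right sum_divide_distrib)
    also have "\<dots> \<le> 2^k * 8 / 1024" using choose_shift_sum[of k] by simp
    also have "\<dots> \<le> 64 / 1024" using power_increasing[OF k, of "2::real"] by simp
    finally show ?thesis .
  qed
  have "cmod (\<i>^k * (c * e1 * Rp + c * e2 * Rq)) \<le> cr * cmod Rp + cr * cmod Rq"
  proof -
    have "cmod (\<i>^k * (c * e1 * Rp + c * e2 * Rq)) = cmod (c * e1 * Rp + c * e2 * Rq)"
      by (simp add: norm_mult norm_power)
    also have "\<dots> \<le> cmod (c * e1 * Rp) + cmod (c * e2 * Rq)" by (rule norm_triangle_ineq)
    also have "\<dots> = cr * cmod Rp + cr * cmod Rq" by (simp add: norm_mult cc e11 e21)
    finally show ?thesis .
  qed
  with bp bq have "cmod (\<i>^k * (c * e1 * Rp + c * e2 * Rq)) < 1/8" by simp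
  with Hk show ?thesis unfolding c_def cr_def e1_def e2_def z_def by blast
qed

theorem lemma3p5:
  fixes t :: nat and x :: real
  assumes "odd t"
  shows "\<exists>k \<in> {0..3::nat}. \<bar>Re (higher_vderiv k (RS_H t) x)\<bar> \<ge> 1/4"
proof (rule ccontr)
  assume neg: "\<not> ?thesis"
  then have small: "\<bar>Re (higher_vderiv k (RS_H t) x)\<bar> < 1/4" if "k \<le> 3" for k
  proof -
    have "k \<in> {0..3}" using that by simp
    with neg show ?thesis by (meson not_le)
  qed
  define cr where "cr = 2 powr (-(real t+1)/2)"
  define z where "z = exp (\<i> * complex_of_real (x / RS_T t))"
  define A0 where "A0 = complex_of_real cr * exp (\<i> * complex_of_real x) * RS_P t z"
  define B0 where "B0 = complex_of_real cr * exp (\<i> * complex_of_real (2 * x)) * RS_Q t z"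
  have cr0: "cr \<ge> 0" by (simp add: cr_def)
  have z1: "cmod z = 1" by (simp add: z_def)
  have gen: "\<bar>Re (\<i>^k * (A0 + 2^k * B0))\<bar> < 3/8" if k: "k \<le> 3" for k
  proof -
    obtain Err where E: "higher_vderiv k (RS_H t) x = \<i>^k * (A0 + 2^k * B0) + Err" and Eb: "cmod Err < 1/8"
      using decomp[OF k, of t x] unfolding A0_def B0_def cr_def z_def by blast
    have "\<bar>Re Err\<bar> \<le> cmod Err" by (rule abs_Re_le_cmod)
    moreover have "\<bar>Re (higher_vderiv k (RS_H t) x)\<bar> < 1/4" by (rule small[OF k])
    moreover have "Re (higher_vderiv k (RS_H t) x) = Re (\<i>^k * (A0 + 2^k * B0)) + Re Err"
      unfolding E by simp
    ultimately show ?thesis using Eb by linarith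
  qed
  have n1: "(cmod A0)^2 + (cmod B0)^2 = 1"
  proof -
    have "(cmod A0)^2 + (cmod B0)^2 = cr^2 * ((cmod (RS_P t z))^2 + (cmod (RS_Q t z))^2)"
      using cr0 by (simp add: A0_def B0_def norm_mult power_mult_distrib algebra_simps)
    also have "\<dots> = cr^2 * 2^(t+1)" by (simp add: RS_norm[OF z1])
    also have "\<dots> = (cr * sqrt 2 ^ (t+1))^2"
      by (simp add: power_mult_distrib power_mult[symmetric] mult.commute[of _ 2] power_mult)
    also have "\<dots> = 1" using c_prop[of t] by (simp add: cr_def)
    finally show ?thesis .
  qed
  have g0: "\<bar>Re A0 + Re B0\<bar> < 3/8" using gen[of 0] by simp
  have g1: "\<bar>Im A0 + 2 * Im B0\<bar> < 3/8"
  proof -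
    have "Re (\<i>^1 * (A0 + 2^1 * B0)) = - (Im A0 + 2 * Im B0)" by simp
    then have "\<bar>Re (\<i>^1 * (A0 + 2^1 * B0))\<bar> = \<bar>Im A0 + 2 * Im B0\<bar>" by (simp only: abs_minus_cancel)
    with gen[of 1] show ?thesis by simp
  qed
  have g2: "\<bar>Re A0 + 4 * Re B0\<bar> < 3/8"
  proof -
    have "Re (\<i>^2 * (A0 + 2^2 * B0)) = - (Re A0 + 4 * Re B0)" by (simp add: power2_eq_square)
    then have "\<bar>Re (\<i>^2 * (A0 + 2^2 * B0))\<bar> = \<bar>Re A0 + 4 * Re B0\<bar>" by (simp only: abs_minus_cancel)
    with gen[of 2] show ?thesis by simp
  qed
  have g3: "\<bar>Im A0 + 8 * Im B0\<bar> < 3/8"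
  proof -
    have "\<i>^3 = -\<i>" by (simp add: power3_eq_cube)
    then show ?thesis using gen[of 3] by (simp add: add.commute)
  qed
  have "(Re A0)^2 + (Im A0)^2 + (Re B0)^2 + (Im B0)^2 = 1" using n1 by (simp add: cmod_power2)
  from final_real[OF this g0 g1 g2 g3] show False .
qed

end
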